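(* Let $N$ be a finitely generated, semipositive binoid, $T$ an $N$-set generated by $r$ elements, and $\mathfrak n$ an $N_+$-primary ideal of $N$. Let $n_1,\dots,n_s\in N_+$ be such that every element of $N$ is either a unit or of the form $u+a_1n_1+\cdots+a_sn_s$ with $u\in N^\times$, $a_j\in\mathbb N$. Then there is a constant $D$, independent of $q$, such that for every $q\in\mathbb N_+$ the pointed set $T/([q]\mathfrak n+T)$ is finite and $$\#\,T/([q]\mathfrak n+T)\le r|N^\times|+Dq^s.$$
   Context: A binoid $(N,+,0,\infty)$ is a commutative monoid $(N,+,0)$ with an element $\infty$ satisfying $a+\infty=\infty$ for all $a\in N$. Write $N^\times$ for the group of units of $N$ and $N_+=N\setminus N^\times$. $N$ is finitely generated if it is finitely generated as a monoid; semipositive if $N\neq\{\infty\}$ and $N^\times$ is finite. An ideal of $N$ is a nonempty subset $I\subseteq N$ with $I+N\subseteq I$ (so $\infty\in I$). For an ideal $I$ and $q\in\mathbb N_+$, $[q]I$ denotes the ideal generated by $\{qa: a\in I\}$. An ideal $\mathfrak n$ is $N_+$-primary if $\mathfrak n\subseteq N_+$ and for every $a\in N_+$ there is $k\ge1$ with $ka\in\mathfrak n$. An $N$-set is a pointed set $(S,p)$ with a map $N\times S\to S$, $(n,s)\mapsto n+s$, such that $(n+m)+s=n+(m+s)$, $0+s=s$, $\infty+s=p$ and $n+p=p$. It is generated by $s_1,\dots,s_r\in S$ if $S=\bigcup_j (N+s_j)$. For an ideal $J$ and an $N$-set $T$, $J+T=\{a+t:a\in J,t\in T\}$ is an $N$-subset;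 for an $N$-subset $S\subseteq T$, the quotient $T/S$ is the $N$-set $(T\setminus S)\cup\{p\}$. For a finite pointed set $S$ we write $\#S=|S|-1$. *)

theory Defs
  imports Complex_Main
begin

definition binoid :: "'a set \<Rightarrow> ('a \<Rightarrow> 'a \<Rightarrow> 'a) \<Rightarrow> 'a \<Rightarrow> 'a \<Rightarrow> bool" where
  "binoid N add z om \<longleftrightarrow> z \<in> N \<and> om \<in> N \<and> (\<forall>a\<in>N. \<forall>b\<in>N. add a b \<in> N)
     \<and> (\<forall>a\<in>N. \<forall>b\<in>N. \<forall>c\<in>N. add (add a b) c = add a (add b c))
     \<and> (\<forall>a\<in>N. \<forall>b\<in>N. add a b = add b a)
     \<and> (\<forall>a\<in>N. add a z = a)
     \<and> (\<forall>a\<in>N. add a om = om)"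

definition bunits :: "'a set \<Rightarrow> ('a \<Rightarrow> 'a \<Rightarrow> 'a) \<Rightarrow> 'a \<Rightarrow> 'a set" where
  "bunits N add z = {a \<in> N. \<exists>b\<in>N. add a b = z}"

definition bpos :: "'a set \<Rightarrow> ('a \<Rightarrow> 'a \<Rightarrow> 'a) \<Rightarrow> 'a \<Rightarrow> 'a set" where
  "bpos N add z = N - bunits N add z"

inductive_set mon_gen :: "('a \<Rightarrow> 'a \<Rightarrow> 'a) \<Rightarrow> 'a \<Rightarrow> 'a set \<Rightarrow> 'a set"
  for add z G where
  zero: "z \<in> mon_gen add z G"
| gen: "g \<in> G \<Longrightarrow> g \<in> mon_gen add z G"
| add: "a \<in> mon_gen add z G \<Longrightarrow> b \<in> mon_gen add z G \<Longrightarrow> add a b \<in> mon_gen add z G"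

definition fin_gen_binoid :: "'a set \<Rightarrow> ('a \<Rightarrow> 'a \<Rightarrow> 'a) \<Rightarrow> 'a \<Rightarrow> bool" where
  "fin_gen_binoid N add z \<longleftrightarrow> (\<exists>G. finite G \<and> G \<subseteq> N \<and> N = mon_gen add z G)"

definition semipositive :: "'a set \<Rightarrow> ('a \<Rightarrow> 'a \<Rightarrow> 'a) \<Rightarrow> 'a \<Rightarrow> 'a \<Rightarrow> bool" where
  "semipositive N add z om \<longleftrightarrow> N \<noteq> {om} \<and> finite (bunits N add z)"

definition nmul :: "('a \<Rightarrow> 'a \<Rightarrow> 'a) \<Rightarrow> 'a \<Rightarrow> nat \<Rightarrow> 'a \<Rightarrow> 'a" where
  "nmul add z k a = ((add a) ^^ k) z"

fun bsum :: "('a \<Rightarrow> 'a \<Rightarrow> 'a) \<Rightarrow> 'a \<Rightarrow> (nat \<Rightarrow> 'a) \<Rightarrow> nat \<Rightarrow> 'a" where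
  "bsum add z f 0 = z"
| "bsum add z f (Suc k) = add (bsum add z f k) (f k)"

definition bideal :: "'a set \<Rightarrow> ('a \<Rightarrow> 'a \<Rightarrow> 'a) \<Rightarrow> 'a set \<Rightarrow> bool" where
  "bideal N add I \<longleftrightarrow> I \<noteq> {} \<and> I \<subseteq> N \<and> (\<forall>a\<in>I. \<forall>n\<in>N. add a n \<in> I)"

definition ideal_gen :: "'a set \<Rightarrow> ('a \<Rightarrow> 'a \<Rightarrow> 'a) \<Rightarrow> 'a set \<Rightarrow> 'a set" where
  "ideal_gen N add S = {add s n | s n. s \<in> S \<and> n \<in> N}"

text \<open>[q]I: the ideal generated by {q a : a in I}.\<close>
definition qideal :: "'a set \<Rightarrow> ('a \<Rightarrow> 'a \<Rightarrow> 'a) \<Rightarrow> 'a \<Rightarrow> nat \<Rightarrow> 'a set \<Rightarrow> 'a set" where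
  "qideal N add z q I = ideal_gen N add ((nmul add z q) ` I)"

definition primary_ideal :: "'a set \<Rightarrow> ('a \<Rightarrow> 'a \<Rightarrow> 'a) \<Rightarrow> 'a \<Rightarrow> 'a set \<Rightarrow> bool" where
  "primary_ideal N add z I \<longleftrightarrow> bideal N add I \<and> I \<subseteq> bpos N add z
     \<and> (\<forall>a\<in>bpos N add z. \<exists>k\<ge>1. nmul add z k a \<in> I)"

definition nset :: "'a set \<Rightarrow> ('a \<Rightarrow> 'a \<Rightarrow> 'a) \<Rightarrow> 'a \<Rightarrow> 'a \<Rightarrow> 'b set \<Rightarrow> 'b \<Rightarrow> ('a \<Rightarrow> 'b \<Rightarrow> 'b) \<Rightarrow> bool" where
  "nset N add z om S p act \<longleftrightarrow> p \<in> S \<and> (\<forall>n\<in>N. \<forall>s\<in>S. act n s \<in> S)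
     \<and> (\<forall>n\<in>N. \<forall>m\<in>N. \<forall>s\<in>S. act (add n m) s = act n (act m s))
     \<and> (\<forall>s\<in>S. act z s = s) \<and> (\<forall>s\<in>S. act om s = p) \<and> (\<forall>n\<in>N. act n p = p)"

definition nset_generated_by :: "'a set \<Rightarrow> 'b set \<Rightarrow> ('a \<Rightarrow> 'b \<Rightarrow> 'b) \<Rightarrow> (nat \<Rightarrow> 'b) \<Rightarrow> nat \<Rightarrow> bool" where
  "nset_generated_by N S act g r \<longleftrightarrow> (\<forall>j<r. g j \<in> S) \<and> S = (\<Union>j<r. (\<lambda>n. act n (g j)) ` N)"

definition ideal_act :: "('a \<Rightarrow> 'b \<Rightarrow> 'b) \<Rightarrow> 'a set \<Rightarrow> 'b set \<Rightarrow> 'b set" where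
  "ideal_act act J T = {act a t | a t. a \<in> J \<and> t \<in> T}"

definition nset_quot :: "'b set \<Rightarrow> 'b \<Rightarrow> 'b set \<Rightarrow> 'b set" where
  "nset_quot T p S = (T - S) \<union> {p}"

end

theory Submission
  imports Defs "HOL-Library.FuncSet"
begin

lemma nmul_Suc: "nmul add z (Suc k) a = add a (nmul add z k a)"
  by (simp add: nmul_def)

lemma nmul_0: "nmul add z 0 a = z"
  by (simp add: nmul_def)

lemma nmul_in:
  assumes "binoid N add z om" "a \<in> N" shows "nmul add z k a \<in> N"
  using assms by (induction k) (auto simp: nmul_Suc nmul_0 binoid_def)

lemma nmul_plus:
  assumes B: "binoid N add z om" and a: "a \<in> N"
  shows "nmul add z (m + n) a = add (nmul add z m a) (nmul add z n a)"
proof (induction m)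
  case 0
  have "nmul add z n a \<in> N" using nmul_in[OF B a] .
  then show ?case using B unfolding binoid_def by (simp add: nmul_0) (metis)
next
  case (Suc m)
  have i1: "nmul add z m a \<in> N" "nmul add z n a \<in> N" using nmul_in[OF B a] by auto
  have ac: "\<forall>a\<in>N. \<forall>b\<in>N. \<forall>c\<in>N. add (add a b) c = add a (add b c)" using B unfolding binoid_def by blast
  show ?case using Suc ac a i1 by (simp add: nmul_Suc)
qed

lemma nmul_mult:
  assumes B: "binoid N add z om" and a: "a \<in> N"
  shows "nmul add z (q * k) a = nmul add z q (nmul add z k a)"
proof (induction q)
  case 0
  then show ?case by (simp add: nmul_0)
next
  case (Suc q)
  have "nmul add z (Suc q * k) a = nmul add z (k + q * k) a" by simp
  also have "\<dots> = add (nmul add z k a) (nmul add z (q * k) a)" using nmul_plus[OF B a] .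
  finally show ?case using Suc by (simp add: nmul_Suc)
qed

lemma binoid_swap:
  assumes B: "binoid N add z om" and x: "x \<in> N" and c: "c \<in> N" and y: "y \<in> N"
  shows "add x (add c y) = add c (add x y)"
proof -
  have ac: "\<And>a b c. a \<in> N \<Longrightarrow> b \<in> N \<Longrightarrow> c \<in> N \<Longrightarrow> add (add a b) c = add a (add b c)"
    and cm: "\<And>a b. a \<in> N \<Longrightarrow> b \<in> N \<Longrightarrow> add a b = add b a"
    using B unfolding binoid_def by blast+
  have "add x (add c y) = add (add x c) y" using ac[OF x c y] by simp
  also have "\<dots> = add (add c x) y" using cm[OF x c] by simp
  also have "\<dots> = add c (add x y)" using ac[OF c x y] .
  finally show ?thesis .
qed

lemma bsum_in:
  assumes "binoid N add z om" "\<forall>i<s. f i \<in> N" shows "bsum add z f s \<in> N"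
  using assms by (induction s) (auto simp: binoid_def)

lemma bsum_cong:
  assumes "\<forall>i<s. f i = h i" shows "bsum add z f s = bsum add z h s"
  using assms by (induction s) auto

lemma bsum_extract:
  assumes B: "binoid N add z om" and c: "c \<in> N" and h: "\<forall>i<s. h i \<in> N" and j: "j < s"
  shows "bsum add z (\<lambda>i. if i = j then add c (h i) else h i) s = add c (bsum add z h s)"
  using h j
proof (induction s)
  case 0
  then show ?case by simp
next
  case (Suc s)
  have hs: "bsum add z h s \<in> N" using bsum_in[OF B] Suc.prems by auto
  have hh: "h s \<in> N" using Suc.prems by auto
  show ?case
  proof (cases "j = s")
    case True
    have e: "bsum add z (\<lambda>i. if i = j then add c (h i) else h i) s = bsum add z h s"
      by (rule bsum_cong) (use True in auto)
    show ?thesis using True e binoid_swap[OF B hs c hh] by simp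
  next
    case False
    then have "j < s" using Suc.prems by auto
    then have "bsum add z (\<lambda>i. if i = j then add c (h i) else h i) s = add c (bsum add z h s)"
      using Suc by auto
    moreover have ac: "\<forall>a\<in>N. \<forall>b\<in>N. \<forall>c\<in>N. add (add a b) c = add a (add b c)"
      using B unfolding binoid_def by blast
    ultimately show ?thesis using False c hs hh by simp
  qed
qed

theorem mainTheorem13:
  fixes N :: "'a set" and add :: "'a \<Rightarrow> 'a \<Rightarrow> 'a" and z om :: 'a
    and T :: "'b set" and p :: 'b and act :: "'a \<Rightarrow> 'b \<Rightarrow> 'b"
    and g :: "nat \<Rightarrow> 'b" and r :: nat and nn :: "'a set"
    and ns :: "nat \<Rightarrow> 'a" and s :: nat
  assumes "binoid N add z om"
    and "fin_gen_binoid N add z"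
    and "semipositive N add z om"
    and "nset N add z om T p act"
    and "nset_generated_by N T act g r"
    and "primary_ideal N add z nn"
    and "\<forall>j<s. ns j \<in> bpos N add z"
    and "\<forall>x\<in>N. x \<in> bunits N add z \<or>
           (\<exists>u\<in>bunits N add z. \<exists>a :: nat \<Rightarrow> nat.
               x = add u (bsum add z (\<lambda>j. nmul add z (a j) (ns j)) s))"
  shows "\<exists>D :: real. \<forall>q :: nat. q \<ge> 1 \<longrightarrow>
           finite (nset_quot T p (ideal_act act (qideal N add z q nn) T)) \<and>
           real (card (nset_quot T p (ideal_act act (qideal N add z q nn) T))) - 1
             \<le> real r * real (card (bunits N add z)) + D * real q ^ s"
proof -
  note B = assms(1)
  define U where "U = bunits N add z"
  have finU: "finite U" using assms(3) by (simp add: semipositive_def U_def)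
  have UN: "U \<subseteq> N" by (auto simp: U_def bunits_def)
  have nsN: "\<forall>j<s. ns j \<in> N" using assms(7) by (auto simp: bpos_def)
  have "\<forall>j. \<exists>kk. j < s \<longrightarrow> nmul add z kk (ns j) \<in> nn"
    using assms(6,7) unfolding primary_ideal_def by metis
  then obtain k where k: "\<And>j. j < s \<Longrightarrow> nmul add z (k j) (ns j) \<in> nn" by metis
  have nnN: "nn \<subseteq> N" using assms(6) by (auto simp: primary_ideal_def bideal_def)
  define K where "K = (\<Sum>j<s. k j)"
  have kK: "\<And>j. j < s \<Longrightarrow> k j \<le> K" unfolding K_def
    by (rule member_le_sum) auto
  define F where "F = (\<lambda>(u, a). add u (bsum add z (\<lambda>j. nmul add z (a j) (ns j)) s))"
  have gT: "\<forall>j<r. g j \<in> T" and Teq: "T = (\<Union>j<r. (\<lambda>n. act n (g j)) ` N)"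
    using assms(5) by (auto simp: nset_generated_by_def)
  have main: "finite (nset_quot T p (ideal_act act (qideal N add z q nn) T)) \<and>
           real (card (nset_quot T p (ideal_act act (qideal N add z q nn) T))) - 1
             \<le> real r * real (card U) + (real r * real (card U) * real K ^ s) * real q ^ s"
    if q: "q \<ge> 1" for q
  proof -
    define Q where "Q = qideal N add z q nn"
    define P where "P = Pi\<^sub>E {..<s} (\<lambda>_. {..<q*K})"
    have sub1: "N - Q \<subseteq> U \<union> F ` (U \<times> P)"
    proof
      fix x assume x: "x \<in> N - Q"
      show "x \<in> U \<union> F ` (U \<times> P)"
      proof (cases "x \<in> U")
        case True then show ?thesis by simp
      next
        case False
        then obtain u a where u: "u \<in> U" and xe: "x = add u (bsum add z (\<lambda>j. nmul add z (a j) (ns j)) s)"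
          using assms(8) x U_def by auto
        have uN: "u \<in> N" using u UN by auto
        have bnd: "a j < q * K" if j: "j < s" for j
        proof (rule ccontr)
          assume "\<not> a j < q * K"
          then have "q * k j \<le> a j" using kK[OF j] by (meson le_trans mult_le_mono2 not_less)
          then obtain d where d: "a j = q * k j + d" using le_Suc_ex by blast
          define c where "c = nmul add z q (nmul add z (k j) (ns j))"
          define h where "h = (\<lambda>i. if i = j then nmul add z d (ns j) else nmul add z (a i) (ns i))"
          have cN: "c \<in> N" unfolding c_def using nmul_in[OF B] nsN j by auto
          have hN: "\<forall>i<s. h i \<in> N" unfolding h_def using nmul_in[OF B] nsN by auto
          have "nmul add z (a j) (ns j) = add c (nmul add z d (ns j))"
            unfolding d c_def using nmul_plus[OF B] nmul_mult[OF B] nsN j by auto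
          then have "bsum add z (\<lambda>j. nmul add z (a j) (ns j)) s
                = bsum add z (\<lambda>i. if i = j then add c (h i) else h i) s"
            by (intro bsum_cong) (auto simp: h_def)
          also have "\<dots> = add c (bsum add z h s)" using bsum_extract[OF B cN hN j] .
          finally have "x = add u (add c (bsum add z h s))" using xe by simp
          also have "\<dots> = add c (add u (bsum add z h s))"
            using binoid_swap[OF B uN cN bsum_in[OF B hN]] .
          finally have "x = add c (add u (bsum add z h s))" .
          moreover have "add u (bsum add z h s) \<in> N"
            using B uN bsum_in[OF B hN] unfolding binoid_def by auto
          moreover have "c \<in> nmul add z q ` nn" unfolding c_def using k[OF j] by auto
          ultimately have "x \<in> Q" unfolding Q_def qideal_def ideal_gen_def by blast
          then show False using x by auto
        qed
        have "restrict a {..<s} \<in> P" unfolding P_def using bnd by auto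
        moreover have "F (u, restrict a {..<s}) = x" unfolding F_def xe
          by (simp, rule arg_cong[where f="add u"], rule bsum_cong, auto)
        ultimately show ?thesis using u by force
      qed
    qed
    have finP: "finite P" unfolding P_def by (simp add: finite_PiE)
    have cardP: "card P = (q*K)^s" unfolding P_def by (simp add: card_PiE)
    have finNQ: "finite (N - Q)" by (rule finite_subset[OF sub1]) (use finU finP in auto)
    have cNQ: "card (N - Q) \<le> card U + card U * (q*K)^s"
    proof -
      have "card (N - Q) \<le> card (U \<union> F ` (U \<times> P))"
        by (rule card_mono) (use finU finP sub1 in auto)
      also have "\<dots> \<le> card U + card (F ` (U \<times> P))" by (rule card_Un_le)
      also have "card (F ` (U \<times> P)) \<le> card (U \<times> P)" by (rule card_image_le) (use finU finP in auto)
      also have "\<dots> = card U * (q*K)^s" using cardP by (simp add: card_cartesian_product)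
      finally show ?thesis by simp
    qed
    define S where "S = ideal_act act Q T"
    have sub2: "T - S \<subseteq> (\<lambda>(j, x). act x (g j)) ` ({..<r} \<times> (N - Q))"
    proof
      fix t assume t: "t \<in> T - S"
      then obtain j x where j: "j < r" and xN: "x \<in> N" and te: "t = act x (g j)"
        using Teq by auto
      have "x \<notin> Q"
      proof
        assume "x \<in> Q"
        then have "t \<in> S" unfolding S_def ideal_act_def te using gT j by blast
        then show False using t by auto
      qed
      then show "t \<in> (\<lambda>(j, x). act x (g j)) ` ({..<r} \<times> (N - Q))" using j xN te by force
    qed
    have finTS: "finite (T - S)" by (rule finite_subset[OF sub2]) (use finNQ in auto)
    have cTS: "card (T - S) \<le> r * card (N - Q)"
    proof -
      have "card (T - S) \<le> card ((\<lambda>(j, x). act x (g j)) ` ({..<r} \<times> (N - Q)))"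
        by (rule card_mono) (use finNQ sub2 in auto)
      also have "\<dots> \<le> card ({..<r} \<times> (N - Q))" by (rule card_image_le) (use finNQ in auto)
      finally show ?thesis by (simp add: card_cartesian_product)
    qed
    have qe: "nset_quot T p S = insert p (T - S)" by (auto simp: nset_quot_def)
    have fq: "finite (nset_quot T p S)" using qe finTS by simp
    have cq: "card (nset_quot T p S) \<le> Suc (card (T - S))"
      using qe finTS by (simp add: card_insert_if)
    have "card (nset_quot T p S) \<le> Suc (r * (card U + card U * (q*K)^s))"
      using cq cTS cNQ by (meson Suc_le_mono le_trans mult_le_mono2)
    then have "real (card (nset_quot T p S)) \<le> real (Suc (r * (card U + card U * (q*K)^s)))"
      by (simp only: of_nat_le_iff)
    then have "real (card (nset_quot T p S)) - 1 \<le> real r * (real (card U) + real (card U) * (real q * real K)^s)"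
      by simp
    also have "\<dots> = real r * real (card U) + (real r * real (card U) * real K ^ s) * real q ^ s"
      by (simp add: algebra_simps power_mult_distrib)
    finally show ?thesis using fq unfolding S_def Q_def by simp
  qed
  show ?thesis
    by (rule exI[where x="real r * real (card U) * real K ^ s"]) (use main U_def in auto)
qed

end
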